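(* Let ${\bm k}$ be a field of characteristic different from $2$, let $n\ge 1$, and let $\hat{A}_{n,{\bm k}}$ be the completed $n$-th Weyl algebra over ${\bm k}$. For $i=1,\dots,n$ let $$X_i = x_i + \sum_{l = 1}^n x_l\sum_{N = 1}^\infty \sum_{j = 1}^n p^{N-1,l}_{ij}(\partial^1,\ldots,\partial^n)\,\partial^j \in \hat{A}_{n,{\bm k}},$$ where, for each $N\ge 1$ and $i,j,l\in\{1,\dots,n\}$, $p^{N-1,l}_{ij}(\partial^1,\ldots,\partial^n)$ is an arbitrary homogeneous polynomial of degree $N-1$ in $\partial^1,\ldots,\partial^n$ with coefficients in ${\bm k}$, antisymmetric in the lower indices: $p^{N-1,l}_{ij}=-p^{N-1,l}_{ji}$. Then for every integer $k\ge 1$ and every function $\alpha:\{1,\ldots,k\}\to\{1,\ldots,n\}$, writing $\alpha_i=\alpha(i)$, $$\sum_{\sigma\in\Sigma(k)} X_{\alpha_{\sigma(1)}}\cdots X_{\alpha_{\sigma(k)}} \triangleright 1 = k!\,x_{\alpha_1}\cdots x_{\alpha_k},$$ where $\Sigma(k)$ is the symmetric group on $k$ letters.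
   Context: The $n$-th Weyl algebra $A_{n,{\bm k}}$ is the associative ${\bm k}$-algebra generated by $x_1,\ldots,x_n,\partial^1,\ldots,\partial^n$ subject to the relations $[x_i,x_j]=0$, $[\partial^i,\partial^j]=0$, $[\partial^j,x_i]=\delta^j_i$ (equivalently $x_i\partial^j-\partial^j x_i=-\delta_i^j$) for all $i,j$. Its completion $\hat{A}_{n,{\bm k}}$ with respect to the filtration by the degree of differential operators consists of arbitrary formal power series in $\partial^1,\ldots,\partial^n$ with coefficients (written on the left) in the commutative polynomial ring ${\bm k}[x_1,\ldots,x_n]$. The Fock action $\triangleright$ of $\hat{A}_{n,{\bm k}}$ on ${\bm k}[x_1,\ldots,x_n]$ is the one in which $x_i$ acts by multiplication by $x_i$ and $\partial^j$ acts as the partial derivative $\partial/\partial x_j$ (on a given polynomial only finitely many terms of a power series act nontrivially); $1\in{\bm k}[x_1,\ldots,x_n]$ is the vacuum. *)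

theory Defs
  imports "HOL-Library.Poly_Mapping" "HOL-Combinatorics.Permutations"
begin

text \<open>Commutative polynomials k[x_1,...,x_n]: finitely supported maps from
  monomials (exponent vectors, nat =>0 nat) to coefficients. Variable indices
  are the natural numbers 1..n as in the paper.\<close>

type_synonym 'k mpoly = "(nat \<Rightarrow>\<^sub>0 nat) \<Rightarrow>\<^sub>0 'k"

definition Var :: "nat \<Rightarrow> 'k::comm_ring_1 mpoly" where
  "Var i = Poly_Mapping.single (Poly_Mapping.single i 1) 1"

definition mdeg :: "(nat \<Rightarrow>\<^sub>0 nat) \<Rightarrow> nat" where
  "mdeg m = (\<Sum>v\<in>Poly_Mapping.keys m. Poly_Mapping.lookup m v)"

definition homogeneous_in :: "nat \<Rightarrow> nat \<Rightarrow> 'k::zero mpoly \<Rightarrow> bool" where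
  "homogeneous_in n d q \<longleftrightarrow> (\<forall>m\<in>Poly_Mapping.keys q. Poly_Mapping.keys m \<subseteq> {1..n} \<and> mdeg m = d)"

text \<open>Falling factorial coefficient: (d/dx)^m x^a = ffact a m * x^(a-m) when m \<le> a.\<close>
definition ffact :: "(nat \<Rightarrow>\<^sub>0 nat) \<Rightarrow> (nat \<Rightarrow>\<^sub>0 nat) \<Rightarrow> nat" where
  "ffact a m = (\<Prod>v\<in>Poly_Mapping.keys m. fact (Poly_Mapping.lookup a v) div fact (Poly_Mapping.lookup a v - Poly_Mapping.lookup m v))"

definition mle :: "(nat \<Rightarrow>\<^sub>0 nat) \<Rightarrow> (nat \<Rightarrow>\<^sub>0 nat) \<Rightarrow> bool" where
  "mle m a \<longleftrightarrow> (\<forall>v. Poly_Mapping.lookup m v \<le> Poly_Mapping.lookup a v)"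

text \<open>Fock action of a formal power series in the partial derivatives,
  given by its coefficient function c (coefficient of the monomial
  (\<partial>^1)^(m_1)...(\<partial>^n)^(m_n)), on a polynomial f. Only the finitely many
  terms with m \<le> a for some monomial a of f act nontrivially.\<close>
definition fps_act :: "((nat \<Rightarrow>\<^sub>0 nat) \<Rightarrow> 'k::comm_ring_1) \<Rightarrow> 'k mpoly \<Rightarrow> 'k mpoly" where
  "fps_act c f = (\<Sum>a\<in>Poly_Mapping.keys f. \<Sum>m\<in>{m. mle m a}.
      Poly_Mapping.single (a - m) (c m * Poly_Mapping.lookup f a * of_nat (ffact a m)))"

definition pderiv_var :: "nat \<Rightarrow> 'k::comm_ring_1 mpoly \<Rightarrow> 'k mpoly" where
  "pderiv_var j f = fps_act (\<lambda>m. if m = Poly_Mapping.single j 1 then 1 else 0) f"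

text \<open>The formal power series \<Sum>_{d\<ge>0} P d, whose homogeneous degree-d part is P d.\<close>
definition series_of :: "(nat \<Rightarrow> 'k::zero mpoly) \<Rightarrow> ((nat \<Rightarrow>\<^sub>0 nat) \<Rightarrow> 'k)" where
  "series_of P m = Poly_Mapping.lookup (P (mdeg m)) m"

text \<open>Fock action of
  X_i = x_i + \<Sum>_{l=1..n} x_l \<Sum>_{N\<ge>1} \<Sum>_{j=1..n} p^{N-1,l}_{ij}(\<partial>) \<partial>^j,
  where p d l i j is the polynomial p^{d,l}_{ij} (so d = N-1).\<close>
definition X_act :: "nat \<Rightarrow> (nat \<Rightarrow> nat \<Rightarrow> nat \<Rightarrow> nat \<Rightarrow> 'k::comm_ring_1 mpoly)
    \<Rightarrow> nat \<Rightarrow> 'k mpoly \<Rightarrow> 'k mpoly" where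
  "X_act n p i f = Var i * f +
     (\<Sum>l\<in>{1..n}. Var l * (\<Sum>j\<in>{1..n}.
        fps_act (series_of (\<lambda>d. p d l i j)) (pderiv_var j f)))"

text \<open>Action of the product X_{b_1} ... X_{b_r} on f (rightmost factor acts first).\<close>
definition Xprod_act :: "nat \<Rightarrow> (nat \<Rightarrow> nat \<Rightarrow> nat \<Rightarrow> nat \<Rightarrow> 'k::comm_ring_1 mpoly)
    \<Rightarrow> nat list \<Rightarrow> 'k mpoly \<Rightarrow> 'k mpoly" where
  "Xprod_act n p bs f = foldr (X_act n p) bs f"

end

theory Submission
  imports Defs "HOL-Combinatorics.Multiset_Permutations"
begin

definition FA :: "((nat \<Rightarrow>\<^sub>0 nat) \<Rightarrow> 'k::comm_ring_1) \<Rightarrow> (nat \<Rightarrow>\<^sub>0 nat) \<Rightarrow> 'k \<Rightarrow> 'k mpoly" where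
  "FA c a r = (\<Sum>m\<in>{m. mle m a}. Poly_Mapping.single (a - m) (c m * r * of_nat (ffact a m)))"

lemma FA_zero[simp]: "FA c a 0 = 0" by (simp add: FA_def)
lemma FA_add: "FA c a (r + s) = FA c a r + FA c a s"
  by (simp add: FA_def distrib_left distrib_right single_add sum.distrib)

lemma fps_act_FA: "fps_act c f = (\<Sum>a\<in>Poly_Mapping.keys f. FA c a (Poly_Mapping.lookup f a))"
  by (simp add: fps_act_def FA_def)

lemma fps_act_superset:
  assumes "finite S" "Poly_Mapping.keys f \<subseteq> S"
  shows "fps_act c f = (\<Sum>a\<in>S. FA c a (Poly_Mapping.lookup f a))"
  unfolding fps_act_FA
  by (rule sum.mono_neutral_left) (use assms in \<open>auto simp: in_keys_iff\<close>)

lemma fps_act_add: "fps_act c (f + g) = fps_act c f + fps_act c g"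
proof -
  let ?S = "Poly_Mapping.keys f \<union> Poly_Mapping.keys g"
  have "fps_act c (f + g) = (\<Sum>a\<in>?S. FA c a (Poly_Mapping.lookup (f+g) a))"
    by (rule fps_act_superset) (auto dest: set_mp[OF keys_add])
  also have "\<dots> = (\<Sum>a\<in>?S. FA c a (Poly_Mapping.lookup f a)) + (\<Sum>a\<in>?S. FA c a (Poly_Mapping.lookup g a))"
    by (simp add: lookup_add FA_add sum.distrib)
  also have "\<dots> = fps_act c f + fps_act c g"
    using fps_act_superset[of ?S f c] fps_act_superset[of ?S g c] by simp
  finally show ?thesis .
qed

lemma fps_act_zero[simp]: "fps_act c 0 = 0" by (simp add: fps_act_def)

lemma fps_act_sum: "fps_act c (\<Sum>x\<in>A. g x) = (\<Sum>x\<in>A. fps_act c (g x))"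
  by (induction A rule: infinite_finite_induct) (auto simp: fps_act_add)

lemma fps_act_neg: "fps_act (\<lambda>m. - c m) f = - fps_act c f"
  by (simp add: fps_act_def single_uminus sum_negf)

lemma finite_mle: "finite {m. mle m a}"
proof -
  let ?h = "\<lambda>m. restrict (Poly_Mapping.lookup m) (Poly_Mapping.keys a)"
  have "inj_on ?h {m. mle m a}"
  proof (rule inj_onI)
    fix m m' assume "m \<in> {m. mle m a}" "m' \<in> {m. mle m a}" "?h m = ?h m'"
    then show "m = m'"
      apply (intro poly_mapping_eqI)
      by (metis (mono_tags, lifting) le_zero_eq mem_Collect_eq mle_def not_in_keys_iff_lookup_eq_zero restrict_apply')
  qed
  moreover have "?h ` {m. mle m a} \<subseteq> PiE (Poly_Mapping.keys a) (\<lambda>v. {0..Poly_Mapping.lookup a v})"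
    by (auto simp: mle_def)
  moreover have "finite (PiE (Poly_Mapping.keys a) (\<lambda>v. {0..Poly_Mapping.lookup a v}))"
    by (intro finite_PiE) auto
  ultimately show ?thesis using finite_imageD finite_subset by metis
qed


lemma pderiv_single:
  "pderiv_var j (Poly_Mapping.single a r) =
     Poly_Mapping.single (a - Poly_Mapping.single j 1) (r * of_nat (Poly_Mapping.lookup a j))"
proof (cases "r = 0")
  case True then show ?thesis by (simp add: pderiv_var_def)
next
  case False
  let ?e = "Poly_Mapping.single j (1::nat)"
  have "pderiv_var j (Poly_Mapping.single a r) =
     (\<Sum>m\<in>{m. mle m a}. Poly_Mapping.single (a - m) ((if m = ?e then 1 else 0) * r * of_nat (ffact a m)))"
    unfolding pderiv_var_def fps_act_FA using False by (simp add: FA_def)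
  also have "\<dots> = (\<Sum>m\<in>{m. mle m a}. if m = ?e then Poly_Mapping.single (a - m) (r * of_nat (ffact a m)) else 0)"
    by (rule sum.cong) auto
  also have "\<dots> = (if mle ?e a then Poly_Mapping.single (a - ?e) (r * of_nat (ffact a ?e)) else 0)"
    by (subst sum.delta[OF finite_mle]) simp
  also have "\<dots> = Poly_Mapping.single (a - ?e) (r * of_nat (Poly_Mapping.lookup a j))"
  proof (cases "mle ?e a")
    case True
    then have "Poly_Mapping.lookup a j \<ge> 1" unfolding mle_def by (metis lookup_single_eq)
    then have "ffact a ?e = Poly_Mapping.lookup a j"
      unfolding ffact_def by (simp add: fact_div_fact)
    with True show ?thesis by simp
  next
    case False
    then have "Poly_Mapping.lookup a j = 0" unfolding mle_def
      by (auto simp: lookup_single when_def split: if_splits)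
    with False show ?thesis by simp
  qed
  finally show ?thesis .
qed

definition mon :: "(nat \<Rightarrow> nat) \<Rightarrow> nat set \<Rightarrow> (nat \<Rightarrow>\<^sub>0 nat)" where
  "mon \<alpha> B = (\<Sum>s\<in>B. Poly_Mapping.single (\<alpha> s) 1)"

lemma prod_Var: "finite B \<Longrightarrow> (\<Prod>s\<in>B. (Var (\<alpha> s) :: 'k::comm_ring_1 mpoly)) = Poly_Mapping.single (mon \<alpha> B) 1"
  by (induction B rule: finite_induct) (auto simp: mon_def Var_def mult_single)

lemma lookup_mon: "finite B \<Longrightarrow> Poly_Mapping.lookup (mon \<alpha> B) j = card {u\<in>B. \<alpha> u = j}"
  by (simp add: mon_def lookup_sum lookup_single when_def sum.If_cases) (simp add: Int_def)

lemma mon_remove: "finite B \<Longrightarrow> u \<in> B \<Longrightarrow> mon \<alpha> B - Poly_Mapping.single (\<alpha> u) 1 = mon \<alpha> (B - {u})"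
  unfolding mon_def by (simp add: sum.remove)

lemma single_of_nat_mult: "Poly_Mapping.single k (of_nat r :: 'k::comm_ring_1) = of_nat r * Poly_Mapping.single k 1"
  by (simp add: mult_single flip: single_of_nat)

lemma pderiv_prod:
  fixes \<alpha> :: "nat \<Rightarrow> nat"
  assumes "finite B"
  shows "pderiv_var j ((\<Prod>s\<in>B. Var (\<alpha> s)) :: 'k::comm_ring_1 mpoly) =
         (\<Sum>u\<in>{u\<in>B. \<alpha> u = j}. \<Prod>s\<in>B - {u}. Var (\<alpha> s))"
proof -
  have "(\<Sum>u\<in>{u\<in>B. \<alpha> u = j}. (\<Prod>s\<in>B - {u}. Var (\<alpha> s)) :: 'k mpoly)
      = (\<Sum>u\<in>{u\<in>B. \<alpha> u = j}. Poly_Mapping.single (mon \<alpha> B - Poly_Mapping.single j 1) 1)"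
    using assms by (intro sum.cong) (auto simp: prod_Var, metis One_nat_def mon_remove)
  also have "\<dots> = Poly_Mapping.single (mon \<alpha> B - Poly_Mapping.single j 1) (of_nat (card {u\<in>B. \<alpha> u = j}))"
    by (simp add: single_of_nat_mult)
  finally show ?thesis using assms by (simp add: prod_Var pderiv_single lookup_mon)
qed


lemma pderiv_add: "pderiv_var j (f + g) = pderiv_var j f + pderiv_var j g"
  by (simp add: pderiv_var_def fps_act_add)

lemma X_act_add: "X_act n p i (f + g) = X_act n p i f + X_act n p i g"
  by (simp add: X_act_def pderiv_add fps_act_add distrib_left sum.distrib algebra_simps)

lemma X_act_zero[simp]: "X_act n p i 0 = 0"
  by (simp add: X_act_def pderiv_var_def)

lemma X_act_sum: "X_act n p i (\<Sum>x\<in>A. g x) = (\<Sum>x\<in>A. X_act n p i (g x))"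
  by (induction A rule: infinite_finite_induct) (auto simp: X_act_add)

lemma X_act_of_nat: "X_act n p i (of_nat r * f) = of_nat r * X_act n p i f"
  by (induction r) (auto simp: X_act_add distrib_right)

lemma sum_perm_set:
  assumes "finite A" "A \<noteq> {}"
  shows "(\<Sum>xs\<in>permutations_of_set A. F xs) = (\<Sum>x\<in>A. \<Sum>ys\<in>permutations_of_set (A - {x}). F (x # ys))"
proof -
  have "(\<Sum>xs\<in>permutations_of_set A. F xs) = (\<Sum>x\<in>A. \<Sum>xs\<in>(\<lambda>xs. x # xs) ` permutations_of_set (A - {x}). F xs)"
    unfolding permutations_of_set_nonempty[OF assms(2)]
    by (rule sum.UNION_disjoint) (use assms in auto)
  also have "\<dots> = (\<Sum>x\<in>A. \<Sum>ys\<in>permutations_of_set (A - {x}). F (x # ys))"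
    apply (rule sum.cong[OF refl]) apply (subst sum.reindex) by (auto simp: inj_on_def)
  finally show ?thesis .
qed

lemma perm_bij:
  "bij_betw (\<lambda>\<sigma>. map \<sigma> [1..<k+1]) {\<sigma>. \<sigma> permutes {1..k}} (permutations_of_set {1..(k::nat)})"
proof (rule bij_betwI')
  fix \<sigma> \<tau> assume s: "\<sigma> \<in> {\<sigma>. \<sigma> permutes {1..k}}" and t: "\<tau> \<in> {\<sigma>. \<sigma> permutes {1..k}}"
  show "(map \<sigma> [1..<k+1] = map \<tau> [1..<k+1]) = (\<sigma> = \<tau>)"
  proof
    assume "map \<sigma> [1..<k+1] = map \<tau> [1..<k+1]"
    then have "\<forall>x\<in>set [1..<k+1]. \<sigma> x = \<tau> x" by (metis map_eq_conv)
    then have "\<forall>x\<in>{1..k}. \<sigma> x = \<tau> x" by auto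
    with s t show "\<sigma> = \<tau>" by (metis mem_Collect_eq permutes_not_in ext)
  qed simp
next
  fix \<sigma> assume s: "\<sigma> \<in> {\<sigma>. \<sigma> permutes {1..k}}"
  then have p: "\<sigma> permutes {1..k}" by simp
  have e: "set [1..<k+1] = {1..k}" by auto
  show "map \<sigma> [1..<k+1] \<in> permutations_of_set {1..k}"
  proof (rule permutations_of_setI)
    show "set (map \<sigma> [1..<k+1]) = {1..k}" unfolding set_map e by (rule permutes_image[OF p])
    show "distinct (map \<sigma> [1..<k+1])" unfolding distinct_map e
      using permutes_inj_on[OF p] by simp
  qed
next
  fix ys assume y: "ys \<in> permutations_of_set {1..k}"
  have set: "set ys = {1..k}" and dis: "distinct ys" using permutations_of_setD[OF y] by auto
  have len: "length ys = k" using distinct_card[OF dis] set by simp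
  define \<sigma> where "\<sigma> t = (if t \<in> {1..k} then ys ! (t - 1) else t)" for t
  have "bij_betw \<sigma> {1..k} {1..k}"
  proof -
    have inj: "inj_on \<sigma> {1..k}"
      unfolding inj_on_def \<sigma>_def using dis len
      by (auto simp: nth_eq_iff_index_eq)
    have sub: "\<sigma> ` {1..k} \<subseteq> {1..k}"
    proof
      fix y assume "y \<in> \<sigma> ` {1..k}"
      then obtain t where t: "t \<in> {1..k}" "y = ys ! (t - 1)" unfolding \<sigma>_def by auto
      then have "t - 1 < length ys" using len by auto
      then have "y \<in> set ys" using t by auto
      then show "y \<in> {1..k}" using set by simp
    qed
    have "card (\<sigma> ` {1..k}) = card {1..k}" using card_image[OF inj] .
    then have "\<sigma> ` {1..k} = {1..k}" using sub by (intro card_subset_eq) auto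
    with inj show ?thesis unfolding bij_betw_def by simp
  qed
  then have perm: "\<sigma> permutes {1..k}"
    by (rule bij_imp_permutes) (auto simp: \<sigma>_def)
  have "map \<sigma> [1..<k+1] = ys"
    by (rule nth_equalityI) (auto simp: len \<sigma>_def nth_upt simp del: upt_Suc)
  with perm show "\<exists>\<sigma>\<in>{\<sigma>. \<sigma> permutes {1..k}}. ys = map \<sigma> [1..<k+1]" by auto
qed


lemma key_zero:
  fixes p :: "nat \<Rightarrow> nat \<Rightarrow> nat \<Rightarrow> nat \<Rightarrow> 'f::field mpoly" and \<alpha> :: "nat \<Rightarrow> nat"
  assumes char: "(2::'f) \<noteq> 0"
    and antisym: "\<And>d l i j. l \<in> {1..n} \<Longrightarrow> i \<in> {1..n} \<Longrightarrow> j \<in> {1..n} \<Longrightarrow>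
               p d l i j = - p d l j i"
    and A: "finite A" and \<alpha>: "\<And>t. t \<in> A \<Longrightarrow> \<alpha> t \<in> {1..n}" and l: "l \<in> {1..n}"
  shows "(\<Sum>t\<in>A. \<Sum>j\<in>{1..n}. fps_act (series_of (\<lambda>d. p d l (\<alpha> t) j))
            (pderiv_var j (\<Prod>s\<in>A - {t}. Var (\<alpha> s)))) = 0"
proof -
  define G where "G t u = fps_act (series_of (\<lambda>d. p d l (\<alpha> t) (\<alpha> u))) (\<Prod>s\<in>A - {t} - {u}. Var (\<alpha> s))" for t u
  have Gneg: "G t u = - G u t" if "t \<in> A" "u \<in> A" for t u
  proof -
    have "series_of (\<lambda>d. p d l (\<alpha> t) (\<alpha> u)) = (\<lambda>m. - series_of (\<lambda>d. p d l (\<alpha> u) (\<alpha> t)) m)"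
      using antisym[OF l \<alpha>[OF that(1)] \<alpha>[OF that(2)]] by (simp add: series_of_def fun_eq_iff)
    moreover have "A - {t} - {u} = A - {u} - {t}" by auto
    ultimately show ?thesis unfolding G_def by (simp add: fps_act_neg)
  qed
  have inner: "(\<Sum>j\<in>{1..n}. fps_act (series_of (\<lambda>d. p d l (\<alpha> t) j))
            (pderiv_var j (\<Prod>s\<in>A - {t}. Var (\<alpha> s)))) = (\<Sum>u\<in>{u\<in>A. u \<noteq> t}. G t u)" if "t \<in> A" for t
  proof -
    have "(\<Sum>j\<in>{1..n}. fps_act (series_of (\<lambda>d. p d l (\<alpha> t) j))
            (pderiv_var j (\<Prod>s\<in>A - {t}. Var (\<alpha> s))))
       = (\<Sum>j\<in>{1..n}. \<Sum>u\<in>{u\<in>A - {t}. \<alpha> u = j}. G t u)"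
      using A by (intro sum.cong refl) (auto simp: pderiv_prod fps_act_sum G_def)
    also have "\<dots> = (\<Sum>u\<in>A - {t}. G t u)"
      by (rule sum.group) (use A \<alpha> in auto)
    also have "\<dots> = (\<Sum>u\<in>{u\<in>A. u \<noteq> t}. G t u)" by (rule sum.cong) auto
    finally show ?thesis .
  qed
  define Z where "Z = (\<Sum>t\<in>A. \<Sum>u\<in>{u\<in>A. u \<noteq> t}. G t u)"
  have eqZ: "(\<Sum>t\<in>A. \<Sum>j\<in>{1..n}. fps_act (series_of (\<lambda>d. p d l (\<alpha> t) j))
            (pderiv_var j (\<Prod>s\<in>A - {t}. Var (\<alpha> s)))) = Z"
    unfolding Z_def by (rule sum.cong[OF refl]) (rule inner)
  have ZZ: "Z = - Z"
  proof -
    have "Z = (\<Sum>u\<in>A. \<Sum>t\<in>{t\<in>A. u \<noteq> t}. G t u)"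
      unfolding Z_def by (rule sum.swap_restrict[OF A A])
    also have "\<dots> = (\<Sum>u\<in>A. \<Sum>t\<in>{t\<in>A. t \<noteq> u}. G t u)"
      by (intro sum.cong refl) auto
    also have "\<dots> = (\<Sum>u\<in>A. \<Sum>t\<in>{t\<in>A. t \<noteq> u}. - G u t)"
      by (intro sum.cong refl Gneg) auto
    also have "\<dots> = - Z" unfolding Z_def by (simp add: sum_negf)
    finally show ?thesis .
  qed
  have Z0: "Z = 0"
  proof (rule poly_mapping_eqI)
    fix m
    have "Poly_Mapping.lookup Z m = - Poly_Mapping.lookup Z m"
      using arg_cong[OF ZZ, of "\<lambda>q. Poly_Mapping.lookup q m"] by (simp only: lookup_uminus)
    then have "Poly_Mapping.lookup Z m + Poly_Mapping.lookup Z m = 0" using eq_neg_iff_add_eq_0 by blast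
    then have "2 * Poly_Mapping.lookup Z m = 0" by (simp only: mult_2)
    then show "Poly_Mapping.lookup Z m = Poly_Mapping.lookup 0 m" using char by simp
  qed
  show ?thesis using eqZ Z0 by (rule trans)
qed

lemma key_lemma:
  fixes p :: "nat \<Rightarrow> nat \<Rightarrow> nat \<Rightarrow> nat \<Rightarrow> 'f::field mpoly" and \<alpha> :: "nat \<Rightarrow> nat"
  assumes char: "(2::'f) \<noteq> 0"
    and antisym: "\<And>d l i j. l \<in> {1..n} \<Longrightarrow> i \<in> {1..n} \<Longrightarrow> j \<in> {1..n} \<Longrightarrow>
               p d l i j = - p d l j i"
    and A: "finite A" and \<alpha>: "\<And>t. t \<in> A \<Longrightarrow> \<alpha> t \<in> {1..n}"
  shows "(\<Sum>t\<in>A. X_act n p (\<alpha> t) (\<Prod>s\<in>A - {t}. Var (\<alpha> s))) = of_nat (card A) * (\<Prod>s\<in>A. Var (\<alpha> s))"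
proof -
  have "(\<Sum>t\<in>A. X_act n p (\<alpha> t) (\<Prod>s\<in>A - {t}. Var (\<alpha> s)))
     = (\<Sum>t\<in>A. \<Prod>s\<in>A. Var (\<alpha> s)) + (\<Sum>t\<in>A. \<Sum>l\<in>{1..n}. Var l * (\<Sum>j\<in>{1..n}.
        fps_act (series_of (\<lambda>d. p d l (\<alpha> t) j)) (pderiv_var j (\<Prod>s\<in>A - {t}. Var (\<alpha> s)))))"
    unfolding X_act_def sum.distrib
    using A by (intro arg_cong2[where f="(+)"] sum.cong refl) (simp_all add: prod.remove)
  also have "(\<Sum>t\<in>A. \<Sum>l\<in>{1..n}. Var l * (\<Sum>j\<in>{1..n}.
        fps_act (series_of (\<lambda>d. p d l (\<alpha> t) j)) (pderiv_var j (\<Prod>s\<in>A - {t}. Var (\<alpha> s)))))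
     = (\<Sum>l\<in>{1..n}. Var l * (\<Sum>t\<in>A. \<Sum>j\<in>{1..n}.
        fps_act (series_of (\<lambda>d. p d l (\<alpha> t) j)) (pderiv_var j (\<Prod>s\<in>A - {t}. Var (\<alpha> s)))))"
    by (subst sum.swap) (simp add: sum_distrib_left)
  also have "\<dots> = 0"
    using key_zero[where p=p and \<alpha>=\<alpha> and n=n, OF char antisym A \<alpha>] by simp
  finally show ?thesis by simp
qed

lemma main_lemma:
  fixes p :: "nat \<Rightarrow> nat \<Rightarrow> nat \<Rightarrow> nat \<Rightarrow> 'f::field mpoly" and \<alpha> :: "nat \<Rightarrow> nat"
  assumes char: "(2::'f) \<noteq> 0"
    and antisym: "\<And>d l i j. l \<in> {1..n} \<Longrightarrow> i \<in> {1..n} \<Longrightarrow> j \<in> {1..n} \<Longrightarrow>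
               p d l i j = - p d l j i"
  shows "finite A \<Longrightarrow> (\<And>t. t \<in> A \<Longrightarrow> \<alpha> t \<in> {1..n}) \<Longrightarrow>
    (\<Sum>xs\<in>permutations_of_set A. Xprod_act n p (map \<alpha> xs) 1) = of_nat (fact (card A)) * (\<Prod>s\<in>A. Var (\<alpha> s))"
proof (induction "card A" arbitrary: A)
  case 0
  then have "A = {}" by simp
  then show ?case by (simp add: Xprod_act_def)
next
  case (Suc m)
  then have ne: "A \<noteq> {}" by auto
  have "(\<Sum>xs\<in>permutations_of_set A. Xprod_act n p (map \<alpha> xs) 1)
     = (\<Sum>x\<in>A. \<Sum>ys\<in>permutations_of_set (A - {x}). X_act n p (\<alpha> x) (Xprod_act n p (map \<alpha> ys) 1))"
    by (simp add: sum_perm_set[OF Suc.prems(1) ne] Xprod_act_def)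
  also have "\<dots> = (\<Sum>x\<in>A. X_act n p (\<alpha> x) (of_nat (fact m) * (\<Prod>s\<in>A - {x}. Var (\<alpha> s))))"
  proof (rule sum.cong[OF refl])
    fix x assume x: "x \<in> A"
    have "(\<Sum>ys\<in>permutations_of_set (A - {x}). Xprod_act n p (map \<alpha> ys) 1)
       = of_nat (fact (card (A - {x}))) * (\<Prod>s\<in>A - {x}. Var (\<alpha> s))"
      by (rule Suc.hyps) (use Suc x in auto)
    moreover have "card (A - {x}) = m" using Suc x by simp
    ultimately show "(\<Sum>ys\<in>permutations_of_set (A - {x}). X_act n p (\<alpha> x) (Xprod_act n p (map \<alpha> ys) 1))
      = X_act n p (\<alpha> x) (of_nat (fact m) * (\<Prod>s\<in>A - {x}. Var (\<alpha> s)))"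
      by (simp add: X_act_sum[symmetric])
  qed
  also have "\<dots> = of_nat (fact m) * (\<Sum>x\<in>A. X_act n p (\<alpha> x) (\<Prod>s\<in>A - {x}. Var (\<alpha> s)))"
    by (simp add: X_act_of_nat sum_distrib_left)
  also have "\<dots> = of_nat (fact m) * (of_nat (card A) * (\<Prod>s\<in>A. Var (\<alpha> s)))"
    by (subst key_lemma[where p=p and \<alpha>=\<alpha> and n=n, OF char antisym Suc.prems]) simp_all
  also have "\<dots> = of_nat (fact (card A)) * (\<Prod>s\<in>A. Var (\<alpha> s))"
    using Suc.hyps(2)[symmetric] by (simp add: algebra_simps)
  finally show ?case .
qed

theorem theorem2p1:
  fixes n k :: nat
    and p :: "nat \<Rightarrow> nat \<Rightarrow> nat \<Rightarrow> nat \<Rightarrow> 'f::field mpoly"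
    and \<alpha> :: "nat \<Rightarrow> nat"
  assumes char: "(2::'f) \<noteq> 0"
    and n: "n \<ge> 1"
    and hom: "\<And>d l i j. l \<in> {1..n} \<Longrightarrow> i \<in> {1..n} \<Longrightarrow> j \<in> {1..n} \<Longrightarrow>
               homogeneous_in n d (p d l i j)"
    and antisym: "\<And>d l i j. l \<in> {1..n} \<Longrightarrow> i \<in> {1..n} \<Longrightarrow> j \<in> {1..n} \<Longrightarrow>
               p d l i j = - p d l j i"
    and k: "k \<ge> 1"
    and \<alpha>: "\<And>t. t \<in> {1..k} \<Longrightarrow> \<alpha> t \<in> {1..n}"
  shows "(\<Sum>\<sigma>\<in>{\<sigma>. \<sigma> permutes {1..k}}.
            Xprod_act n p (map (\<lambda>t. \<alpha> (\<sigma> t)) [1..<k+1]) 1)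
         = of_nat (fact k) * (\<Prod>t\<in>{1..k}. Var (\<alpha> t))"
proof -
  have "(\<Sum>\<sigma>\<in>{\<sigma>. \<sigma> permutes {1..k}}. Xprod_act n p (map (\<lambda>t. \<alpha> (\<sigma> t)) [1..<k+1]) 1)
      = (\<Sum>\<sigma>\<in>{\<sigma>. \<sigma> permutes {1..k}}. (\<lambda>xs. Xprod_act n p (map \<alpha> xs) 1) (map \<sigma> [1..<k+1]))"
    by (simp only: map_map comp_def)
  also have "\<dots> = (\<Sum>xs\<in>permutations_of_set {1..k}. Xprod_act n p (map \<alpha> xs) 1)"
    by (rule sum.reindex_bij_betw[OF perm_bij])
  also have "\<dots> = of_nat (fact (card {1..k})) * (\<Prod>t\<in>{1..k}. Var (\<alpha> t))"
    by (rule main_lemma[where p=p and \<alpha>=\<alpha> and n=n, OF char antisym]) (use \<alpha> in auto)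
  finally show ?thesis by simp
qed

end
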